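(* Let $\vec B=(b_0,\dots,b_{N-1})$ be a binary digit vector and let $\overleftarrow{B}$ be its reverse, $\overleftarrow{B}(n)=b_{N-1-n}$ for $n=0,\dots,N-1$. Then for all $x\in[0,1]$, $$F_{\overleftarrow{B}}(x)=1-F_{\vec B}(1-x).$$
   Context: A binary digit vector of length (scale factor) $N\ge3$ is $\vec B=(b_0,\dots,b_{N-1})\in\{0,1\}^N$ with $2\le\|\vec B\|:=\sum_i b_i\le N-1$; its digit set is $D=\{i:b_i=1\}$. With $\phi_d(x)=(x+d)/N$ for $d\in D$, let $\mu_{\vec B}$ be the unique Borel probability measure with $\mu_{\vec B}=\frac{1}{\|\vec B\|}\sum_{d\in D}\mu_{\vec B}\circ\phi_d^{-1}$, supported on the attractor $C_{\vec B}\subset[0,1]$. The CDF is $F_{\vec B}(x)=\mu_{\vec B}([0,x])$, $x\in[0,1]$. *)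

theory Defs
  imports "HOL-Probability.Probability"
begin

definition is_bdv :: "nat list \<Rightarrow> bool" where
  "is_bdv B \<longleftrightarrow> length B \<ge> 3 \<and> set B \<subseteq> {0, 1} \<and>
     2 \<le> sum_list B \<and> sum_list B \<le> length B - 1"

definition digit_set :: "nat list \<Rightarrow> nat set" where
  "digit_set B = {i. i < length B \<and> B ! i = 1}"

definition sim_map :: "nat \<Rightarrow> nat \<Rightarrow> real \<Rightarrow> real" where
  "sim_map N d x = (x + real d) / real N"

definition self_similar :: "nat list \<Rightarrow> real measure \<Rightarrow> bool" where
  "self_similar B \<mu> \<longleftrightarrow>
     (\<forall>A \<in> sets borel. measure \<mu> A =
        (1 / real (sum_list B)) * (\<Sum>d\<in>digit_set B. measure \<mu> (sim_map (length B) d -` A)))"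

definition bdv_measure :: "nat list \<Rightarrow> real measure" where
  "bdv_measure B = (THE \<mu>. prob_space \<mu> \<and> sets \<mu> = sets (borel :: real measure) \<and> self_similar B \<mu>)"

definition bdv_cdf :: "nat list \<Rightarrow> real \<Rightarrow> real" where
  "bdv_cdf B x = measure (bdv_measure B) {0..x}"

end

theory Submission
  imports Defs
begin


lemma card_digit_set:
  assumes "set B \<subseteq> {0,1}"
  shows "card (digit_set B) = sum_list B"
proof -
  have "sum_list B = (\<Sum>i<length B. B ! i)"
    by (simp add: sum_list_sum_nth atLeast0LessThan)
  also have "\<dots> = (\<Sum>i<length B. if B ! i = 1 then 1 else 0)"
  proof (rule sum.cong)
    fix i assume "i \<in> {..<length B}"
    then have "B ! i \<in> {0,1}" using assms nth_mem by fastforce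
    then show "B ! i = (if B ! i = 1 then 1 else 0)" by auto
  qed simp
  also have "\<dots> = card {i\<in>{..<length B}. B ! i = 1}"
    by (simp add: sum.If_cases Collect_conj_eq lessThan_def)
  also have "{i\<in>{..<length B}. B ! i = 1} = digit_set B" by (auto simp: digit_set_def)
  finally show ?thesis by simp
qed

lemma digit_set_rev:
  "digit_set (rev B) = (\<lambda>d. length B - 1 - d) ` digit_set B"
proof -
  have "d \<in> digit_set (rev B) \<longleftrightarrow> d \<in> (\<lambda>d. length B - 1 - d) ` digit_set B" for d
  proof
    assume "d \<in> digit_set (rev B)"
    then have "d < length B" "B ! (length B - 1 - d) = 1" by (auto simp: digit_set_def rev_nth)
    then show "d \<in> (\<lambda>d. length B - 1 - d) ` digit_set B"
      by (intro image_eqI[of _ _ "length B - 1 - d"]) (auto simp: digit_set_def)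
  next
    assume "d \<in> (\<lambda>d. length B - 1 - d) ` digit_set B"
    then obtain e where "e < length B" "B ! e = 1" "d = length B - 1 - e" by (auto simp: digit_set_def)
    then show "d \<in> digit_set (rev B)" by (auto simp: digit_set_def rev_nth Suc_diff_Suc)
  qed
  then show ?thesis by blast
qed

lemma is_bdv_rev: "is_bdv B \<Longrightarrow> is_bdv (rev B)"
  by (simp add: is_bdv_def sum_list_rev)



lemma avg_le1:
  fixes a :: "nat \<Rightarrow> real"
  assumes "finite D" "card D = k" "k > 0" "\<And>d. d \<in> D \<Longrightarrow> a d \<le> c'" "c = (1/k) * (\<Sum>d\<in>D. a d)"
  shows "c \<le> c'"
proof -
  have "(\<Sum>d\<in>D. a d) \<le> (\<Sum>d\<in>D. c')" by (rule sum_mono) (use assms in auto)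
  then have "(\<Sum>d\<in>D. a d) \<le> k * c'" using assms by simp
  then show ?thesis using assms by (simp add: pos_divide_le_eq mult.commute)
qed

lemma avg_le2:
  fixes a :: "nat \<Rightarrow> real"
  assumes "finite D" "card D = k" "k > 0" "\<And>d. d \<in> D \<Longrightarrow> a d \<le> c" "d0 \<in> D" "a d0 \<le> c'"
    "c = (1/k) * (\<Sum>d\<in>D. a d)"
  shows "c \<le> c'"
proof -
  have "(\<Sum>d\<in>D. a d) = a d0 + (\<Sum>d\<in>D-{d0}. a d)" using assms by (simp add: sum.remove)
  also have "(\<Sum>d\<in>D-{d0}. a d) \<le> (\<Sum>d\<in>D-{d0}. c)" by (rule sum_mono) (use assms in auto)
  also have "\<dots> = (real k - 1) * c" using assms by (simp add: card_Diff_singleton of_nat_diff)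
  finally have "(\<Sum>d\<in>D. a d) \<le> c' + (real k - 1) * c" using assms by simp
  moreover have "c * k = (\<Sum>d\<in>D. a d)" using assms by simp
  ultimately show ?thesis by (simp add: algebra_simps)
qed

locale ssm =
  fixes B :: "nat list" and M :: "real measure"
  assumes bdv: "is_bdv B" and ps: "prob_space M" and sets_M: "sets M = sets borel"
    and ss: "self_similar B M"
begin

sublocale prob_space M by (rule ps)

lemma space_M: "space M = UNIV"
  using sets_eq_imp_space_eq[OF sets_M] by simp

lemma borel_in[simp]: "A \<in> sets borel \<Longrightarrow> A \<in> sets M"
  using sets_M by simp

lemma N_ge: "length B \<ge> 3" using bdv by (simp add: is_bdv_def)

lemma N_pos: "real (length B) > 0"
proof -
  have "length B > 0" using N_ge by linarith
  then show ?thesis by simp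
qed

lemma card_D: "card (digit_set B) = sum_list B"
  using bdv card_digit_set by (simp add: is_bdv_def)

lemma k_ge: "sum_list B \<ge> 2" using bdv by (simp add: is_bdv_def)

lemma finite_D: "finite (digit_set B)" by (simp add: digit_set_def)

lemma D_lt: "d \<in> digit_set B \<Longrightarrow> d < length B" by (simp add: digit_set_def)

lemma meas_sim[measurable]: "sim_map n d \<in> borel_measurable borel"
  unfolding sim_map_def by measurable

lemma ssA: "A \<in> sets borel \<Longrightarrow> measure M A =
   (1 / real (sum_list B)) * (\<Sum>d\<in>digit_set B. measure M (sim_map (length B) d -` A))"
  using ss by (simp add: self_similar_def)

lemma exists_d0: "\<exists>d0\<in>digit_set B. d0 + 2 \<le> length B"
proof -
  have "card (digit_set B) \<ge> 2" using card_D k_ge by simp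
  then have "\<not> (\<forall>x\<in>digit_set B. \<forall>y\<in>digit_set B. x = y)"
    using card_le_Suc0_iff_eq[OF finite_D] by auto
  then obtain a b where ab: "a \<in> digit_set B" "b \<in> digit_set B" "a \<noteq> b" by blast
  show ?thesis
  proof (cases "a < b")
    case True then show ?thesis using ab D_lt[of b] by (intro bexI[of _ a]) auto
  next
    case False then show ?thesis using ab D_lt[of a] by (intro bexI[of _ b]) auto
  qed
qed

lemma exists_d1: "\<exists>d1\<in>digit_set B. d1 \<ge> 1"
proof -
  have "card (digit_set B) \<ge> 2" using card_D k_ge by simp
  then have "\<not> (\<forall>x\<in>digit_set B. \<forall>y\<in>digit_set B. x = y)"
    using card_le_Suc0_iff_eq[OF finite_D] by auto
  then obtain a b where ab: "a \<in> digit_set B" "b \<in> digit_set B" "a \<noteq> b" by blast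
  show ?thesis
  proof (cases "a < b")
    case True then show ?thesis using ab by (intro bexI[of _ b]) auto
  next
    case False then show ?thesis using ab by (intro bexI[of _ a]) auto
  qed
qed

lemma pre_point: "sim_map (length B) d -` {p} = {real (length B) * p - real d}"
  using N_pos by (auto simp: sim_map_def field_simps)

lemma ss_point: "measure M {p} = (1 / real (sum_list B)) *
    (\<Sum>d\<in>digit_set B. measure M {real (length B) * p - real d})"
  using ssA[of "{p}"] by (simp add: pre_point)

end



context ssm begin

lemma inj_digits:
  fixes n :: nat
  assumes "n > 0" "d < n" "d' < n" "n * e + d = n * e' + d'"
  shows "e = e' \<and> d = d'"
proof -
  have h: "d + e * n = d' + e' * n" using assms(4) by (simp add: ac_simps)
  have "d = (d + e * n) mod n" using assms by simp
  also have "\<dots> = (d' + e' * n) mod n" using h by simp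
  also have "\<dots> = d'" using assms by simp
  finally have dd: "d = d'" .
  then have "n * e = n * e'" using assms by simp
  then show ?thesis using assms dd by simp
qed

lemma atoms_iter:
  "\<exists>E::nat set. finite E \<and> card E = sum_list B ^ n \<and>
    measure M {p} = (1 / real (sum_list B) ^ n) *
      (\<Sum>e\<in>E. measure M {real (length B) ^ n * p - real e})"
proof (induction n)
  case 0
  show ?case by (intro exI[of _ "{0}"]) simp
next
  case (Suc n)
  let ?N = "length B" and ?k = "sum_list B" and ?D = "digit_set B"
  from Suc obtain E where E: "finite E" "card E = ?k ^ n"
    "measure M {p} = (1 / real ?k ^ n) * (\<Sum>e\<in>E. measure M {real ?N ^ n * p - real e})"
    by blast
  define g where "g = (\<lambda>(e, d). ?N * e + d)"
  have inj: "inj_on g (E \<times> ?D)"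
    unfolding inj_on_def g_def
  proof (clarify)
    fix e d e' d' assume "e \<in> E" "d \<in> ?D" "e' \<in> E" "d' \<in> ?D" "?N * e + d = ?N * e' + d'"
    then show "e = e' \<and> d = d'" using inj_digits[of ?N d d' e e'] D_lt N_pos by auto
  qed
  have step: "measure M {real ?N ^ n * p - real e} =
     (1 / real ?k) * (\<Sum>d\<in>?D. measure M {real ?N ^ Suc n * p - real (g (e, d))})" for e
  proof -
    have "real ?N * (real ?N ^ n * p - real e) - real d = real ?N ^ Suc n * p - real (g (e, d))" for d
      by (simp add: g_def algebra_simps)
    then show ?thesis using ss_point[of "real ?N ^ n * p - real e"] by simp
  qed
  have "(\<Sum>e\<in>E. measure M {real ?N ^ n * p - real e}) =
     (1 / real ?k) * (\<Sum>e\<in>E. \<Sum>d\<in>?D. measure M {real ?N ^ Suc n * p - real (g (e, d))})"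
    by (simp add: step sum_distrib_left)
  also have "(\<Sum>e\<in>E. \<Sum>d\<in>?D. measure M {real ?N ^ Suc n * p - real (g (e, d))}) =
      (\<Sum>x\<in>E \<times> ?D. measure M {real ?N ^ Suc n * p - real (g x)})"
    by (simp add: sum.cartesian_product)
  also have "\<dots> = (\<Sum>y\<in>g ` (E \<times> ?D). measure M {real ?N ^ Suc n * p - real y})"
    by (simp add: sum.reindex[OF inj])
  finally have *: "(\<Sum>e\<in>E. measure M {real ?N ^ n * p - real e}) =
     (1 / real ?k) * (\<Sum>y\<in>g ` (E \<times> ?D). measure M {real ?N ^ Suc n * p - real y})" .
  show ?case
  proof (intro exI[of _ "g ` (E \<times> ?D)"] conjI)
    show "finite (g ` (E \<times> ?D))" using E finite_D by simp
    show "card (g ` (E \<times> ?D)) = ?k ^ Suc n"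
      using card_image[OF inj] E card_D by (simp add: card_cartesian_product)
    show "measure M {p} = 1 / real ?k ^ Suc n *
      (\<Sum>y\<in>g ` (E \<times> ?D). measure M {real ?N ^ Suc n * p - real y})"
      using E(3) * by simp
  qed
qed

lemma atom_le: "measure M {p} \<le> (1 / real (sum_list B)) ^ n"
proof -
  obtain E :: "nat set" where E: "finite E" "card E = sum_list B ^ n"
    "measure M {p} = (1 / real (sum_list B) ^ n) *
      (\<Sum>e\<in>E. measure M {real (length B) ^ n * p - real e})"
    using atoms_iter by blast
  define c where "c = real (length B) ^ n * p"
  have inj: "inj_on (\<lambda>e. c - real e) E" by (auto simp: inj_on_def)
  have "(\<Sum>e\<in>E. measure M {c - real e}) = (\<Sum>y\<in>(\<lambda>e. c - real e) ` E. measure M {y})"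
    by (simp add: sum.reindex[OF inj])
  also have "\<dots> = measure M ((\<lambda>e. c - real e) ` E)"
    by (rule finite_measure_eq_sum_singleton[symmetric]) (use E in auto)
  also have "\<dots> \<le> 1" by (rule prob_le_1)
  finally have "(\<Sum>e\<in>E. measure M {c - real e}) \<le> 1" .
  then have "measure M {p} \<le> 1 / real (sum_list B) ^ n"
    using E(3) k_ge unfolding c_def by (simp add: divide_right_mono)
  then show ?thesis by (simp add: power_one_over)
qed

lemma atom_zero: "measure M {p} = 0"
proof (rule ccontr)
  assume "measure M {p} \<noteq> 0"
  then have pos: "measure M {p} > 0" using measure_nonneg[of M "{p}"] by linarith
  have "1 / real (sum_list B) < 1" using k_ge by simp
  then obtain n where "(1 / real (sum_list B)) ^ n < measure M {p}"
    using real_arch_pow_inv[OF pos] by blast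
  then show False using atom_le[of p n] by linarith
qed

end



context ssm begin

lemma n_le_pow: "real n \<le> real (length B) ^ n"
proof -
  have "n < 2 ^ n" by (rule less_exp)
  also have "(2::nat) ^ n \<le> length B ^ n" using N_ge by (intro power_mono) auto
  finally have "n \<le> length B ^ n" by simp
  then show ?thesis by (metis of_nat_le_iff of_nat_power)
qed

lemma right_step:
  assumes "t \<ge> 0"
  shows "measure M {1 + t..} \<le> measure M {1 + real (length B) * t..}"
proof (rule avg_le1[OF finite_D card_D _ _ ssA])
  show "0 < sum_list B" using k_ge by simp
  fix d assume d: "d \<in> digit_set B"
  have "sim_map (length B) d -` {1 + t..} \<subseteq> {1 + real (length B) * t..}"
  proof
    fix x assume "x \<in> sim_map (length B) d -` {1 + t..}"
    then have "(x + real d) / real (length B) \<ge> 1 + t" by (simp add: sim_map_def)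
    then have "x + real d \<ge> real (length B) * (1 + t)" using N_pos by (simp add: field_simps)
    moreover have "real d + 1 \<le> real (length B)" using D_lt[OF d] by linarith
    ultimately show "x \<in> {1 + real (length B) * t..}" by (simp add: algebra_simps)
  qed
  then show "measure M (sim_map (length B) d -` {1 + t..}) \<le> measure M {1 + real (length B) * t..}"
    by (intro finite_measure_mono) auto
qed simp

lemma right0: "measure M {1..} \<le> measure M {2..}"
proof -
  obtain d0 where d0: "d0 \<in> digit_set B" "d0 + 2 \<le> length B" using exists_d0 by blast
  show ?thesis
  proof (rule avg_le2[OF finite_D card_D _ _ d0(1) _ ssA])
    show "0 < sum_list B" using k_ge by simp
    fix d assume d: "d \<in> digit_set B"
    have "sim_map (length B) d -` {1..} \<subseteq> {1..}"
    proof
      fix x assume "x \<in> sim_map (length B) d -` {1..}"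
      then have "(x + real d) / real (length B) \<ge> 1" by (simp add: sim_map_def)
      then have "x + real d \<ge> real (length B)" using N_pos by (simp add: field_simps)
      moreover have "real d + 1 \<le> real (length B)" using D_lt[OF d] by linarith
      ultimately show "x \<in> {1..}" by simp
    qed
    then show "measure M (sim_map (length B) d -` {1..}) \<le> measure M {1..}"
      by (intro finite_measure_mono) auto
  next
    have "sim_map (length B) d0 -` {1..} \<subseteq> {2..}"
    proof
      fix x assume "x \<in> sim_map (length B) d0 -` {1..}"
      then have "(x + real d0) / real (length B) \<ge> 1" by (simp add: sim_map_def)
      then have "x + real d0 \<ge> real (length B)" using N_pos by (simp add: field_simps)
      moreover have "real d0 + 2 \<le> real (length B)" using d0 by linarith
      ultimately show "x \<in> {2..}" by simp
    qed
    then show "measure M (sim_map (length B) d0 -` {1..}) \<le> measure M {2..}"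
      by (intro finite_measure_mono) auto
  qed simp
qed

lemma right_iter: "measure M {1..} \<le> measure M {1 + real (length B) ^ n..}"
proof (induction n)
  case 0 then show ?case using right0 by (simp add: one_add_one)
next
  case (Suc n)
  have "measure M {1 + real (length B) ^ n..} \<le> measure M {1 + real (length B) * real (length B) ^ n..}"
    by (rule right_step) simp
  then show ?case using Suc by simp
qed

lemma right_zero: "measure M {1..} = 0"
proof -
  have lim: "(\<lambda>n. measure M {real n..}) \<longlonglongrightarrow> measure M (\<Inter>n. {real n..})"
    by (rule finite_Lim_measure_decseq) (auto simp: decseq_def)
  have "(\<Inter>n. {real n..}) = {}"
  proof -
    have "x \<notin> (\<Inter>n. {real n..})" for x :: real
    proof -
      obtain n where "x < real n" using reals_Archimedean2 by blast
      then show ?thesis by (auto intro!: exI[of _ n])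
    qed
    then show ?thesis by blast
  qed
  with lim have lim0: "(\<lambda>n. measure M {real n..}) \<longlonglongrightarrow> 0" by simp
  have "measure M {1..} \<le> measure M {real n..}" for n
  proof -
    have sub: "{1 + real (length B) ^ n..} \<subseteq> {real n..}"
      by (rule atLeast_subset_iff[THEN iffD2]) (use n_le_pow[of n] in linarith)
    have "measure M {1 + real (length B) ^ n..} \<le> measure M {real n..}"
      using sub by (intro finite_measure_mono) auto
    then show ?thesis using right_iter[of n] by linarith
  qed
  then have "measure M {1..} \<le> 0" by (intro LIMSEQ_le_const[OF lim0]) auto
  then show ?thesis using measure_nonneg[of M "{1..}"] by linarith
qed

lemma left_step:
  assumes "t \<ge> 0"
  shows "measure M {..< - t} \<le> measure M {..< - (real (length B) * t)}"
proof (rule avg_le1[OF finite_D card_D _ _ ssA])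
  show "0 < sum_list B" using k_ge by simp
  fix d assume d: "d \<in> digit_set B"
  have "sim_map (length B) d -` {..< - t} \<subseteq> {..< - (real (length B) * t)}"
  proof
    fix x assume "x \<in> sim_map (length B) d -` {..< - t}"
    then have "(x + real d) / real (length B) < - t" by (simp add: sim_map_def)
    then have "x + real d < - (real (length B) * t)" using N_pos by (simp add: field_simps)
    then show "x \<in> {..< - (real (length B) * t)}" by simp
  qed
  then show "measure M (sim_map (length B) d -` {..< - t}) \<le> measure M {..< - (real (length B) * t)}"
    by (intro finite_measure_mono) auto
qed simp

lemma left0: "measure M {..<0} \<le> measure M {..< -1}"
proof -
  obtain d0 where d0: "d0 \<in> digit_set B" "d0 \<ge> 1" using exists_d1 by blast
  show ?thesis
  proof (rule avg_le2[OF finite_D card_D _ _ d0(1) _ ssA])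
    show "0 < sum_list B" using k_ge by simp
    fix d assume d: "d \<in> digit_set B"
    have "sim_map (length B) d -` {..<0} \<subseteq> {..<0}"
      using N_pos by (auto simp: sim_map_def field_simps)
    then show "measure M (sim_map (length B) d -` {..<0}) \<le> measure M {..<0}"
      by (intro finite_measure_mono) auto
  next
    have "sim_map (length B) d0 -` {..<0} \<subseteq> {..< -1}"
    proof
      fix x assume "x \<in> sim_map (length B) d0 -` {..<0}"
      then have "(x + real d0) / real (length B) < 0" by (simp add: sim_map_def)
      then have "x + real d0 < 0" using N_pos by (simp add: field_simps)
      then show "x \<in> {..< -1}" using d0 by simp
    qed
    then show "measure M (sim_map (length B) d0 -` {..<0}) \<le> measure M {..< -1}"
      by (intro finite_measure_mono) auto
  qed simp
qed

lemma left_iter: "measure M {..<0} \<le> measure M {..< - (real (length B) ^ n)}"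
proof (induction n)
  case 0 then show ?case using left0 by simp
next
  case (Suc n)
  have "measure M {..< - (real (length B) ^ n)} \<le> measure M {..< - (real (length B) * real (length B) ^ n)}"
    by (rule left_step) simp
  then show ?case using Suc by simp
qed

lemma left_zero: "measure M {..<0} = 0"
proof -
  have lim: "(\<lambda>n. measure M {..< - real n}) \<longlonglongrightarrow> measure M (\<Inter>n. {..< - real n})"
    by (rule finite_Lim_measure_decseq) (auto simp: decseq_def)
  have "(\<Inter>n. {..< - real n}) = {}"
  proof -
    have "x \<notin> (\<Inter>n. {..< - real n})" for x :: real
    proof -
      obtain n where "- x < real n" using reals_Archimedean2 by blast
      then show ?thesis by (auto intro!: exI[of _ n])
    qed
    then show ?thesis by blast
  qed
  with lim have lim0: "(\<lambda>n. measure M {..< - real n}) \<longlonglongrightarrow> 0" by simp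
  have "measure M {..<0} \<le> measure M {..< - real n}" for n
  proof -
    have "measure M {..< - (real (length B) ^ n)} \<le> measure M {..< - real n}"
      using n_le_pow[of n] by (intro finite_measure_mono) auto
    then show ?thesis using left_iter[of n] by linarith
  qed
  then have "measure M {..<0} \<le> 0" by (intro LIMSEQ_le_const[OF lim0]) auto
  then show ?thesis using measure_nonneg[of M "{..<0}"] by linarith
qed

end



definition nint :: "nat \<Rightarrow> int \<Rightarrow> nat \<Rightarrow> real set" where
  "nint K m n = {of_int m / real K ^ n ..< (of_int m + 1) / real K ^ n}"

context ssm begin

lemma B_ne: "B \<noteq> []" using N_ge by (cases B) auto

lemma nint0: "measure M (nint (length B) m 0) = (if m = 0 then 1 else 0)"
proof (cases "m = 0")
  case True
  have "measure M (space M - {0..<1}) = 1 - measure M {0..<1}" by (rule prob_compl) simp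
  moreover have "space M - {0..<1} = {..<0} \<union> {1..}" using space_M by auto
  moreover have "measure M ({..<0} \<union> {1..}) \<le> measure M {..<0} + measure M {1..}"
    by (rule measure_Un_le) auto
  ultimately have "1 - measure M {0..<1} \<le> 0" using left_zero right_zero by simp
  then have "measure M {0..<1} = 1" using prob_le_1[of "{0..<1}"] by linarith
  then show ?thesis using True by (simp add: nint_def)
next
  case False
  show ?thesis
  proof (cases "m > 0")
    case True
    then have "nint (length B) m 0 \<subseteq> {1..}" by (auto simp: nint_def)
    then have "measure M (nint (length B) m 0) \<le> 0"
      using right_zero finite_measure_mono[of _ "{1..}"] by fastforce
    then show ?thesis using False measure_nonneg[of M "nint (length B) m 0"] by simp
  next
    case F2: False
    then have "m + 1 \<le> 0" using False by simp
    then have "nint (length B) m 0 \<subseteq> {..<0}" by (auto simp: nint_def)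
    then have "measure M (nint (length B) m 0) \<le> 0"
      using left_zero finite_measure_mono[of _ "{..<0}"] by fastforce
    then show ?thesis using False measure_nonneg[of M "nint (length B) m 0"] by simp
  qed
qed

lemma nint_borel[simp]: "nint K m n \<in> sets borel" by (simp add: nint_def)

lemma pre_nint: "sim_map (length B) d -` nint (length B) m (Suc n) =
    nint (length B) (m - int d * int (length B) ^ n) n"
proof -
  let ?N = "real (length B)"
  have Np: "?N > 0" "?N ^ n > 0" using N_pos by auto
  have "x \<in> sim_map (length B) d -` nint (length B) m (Suc n) \<longleftrightarrow>
        x \<in> nint (length B) (m - int d * int (length B) ^ n) n" for x
  proof -
    have "x \<in> sim_map (length B) d -` nint (length B) m (Suc n) \<longleftrightarrow>
      of_int m / ?N ^ Suc n \<le> (x + d) / ?N \<and> (x + d) / ?N < (of_int m + 1) / ?N ^ Suc n"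
      by (simp add: nint_def sim_map_def)
    also have "\<dots> \<longleftrightarrow> of_int m \<le> (x + d) * ?N ^ n \<and> (x + d) * ?N ^ n < of_int m + 1"
    proof -
      have r: "(x + d) / ?N = ((x + d) * ?N ^ n) / ?N ^ Suc n" using Np by (simp add: field_simps)
      have pp: "?N ^ Suc n > 0" using Np by simp
      have nn: "\<not> (?N * ?N ^ n < 0)" using Np by (simp add: not_less)
      show ?thesis unfolding r using pp by (simp only: divide_le_cancel divide_less_cancel) (simp add: B_ne nn)
    qed
    also have "\<dots> \<longleftrightarrow> of_int (m - int d * int (length B) ^ n) \<le> x * ?N ^ n \<and>
        x * ?N ^ n < of_int (m - int d * int (length B) ^ n) + 1"
      by (simp add: algebra_simps)
    also have "\<dots> \<longleftrightarrow> x \<in> nint (length B) (m - int d * int (length B) ^ n) n"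
      using Np by (simp add: nint_def divide_le_eq le_divide_eq divide_less_eq less_divide_eq)
    finally show ?thesis .
  qed
  then show ?thesis by blast
qed

lemma nint_step: "measure M (nint (length B) m (Suc n)) = (1 / real (sum_list B)) *
   (\<Sum>d\<in>digit_set B. measure M (nint (length B) (m - int d * int (length B) ^ n) n))"
  using ssA[of "nint (length B) m (Suc n)"] by (simp add: pre_nint)

end



context ssm begin

lemma lt_neg: "j \<le> 0 \<Longrightarrow> measure M {..< of_int j / real (length B) ^ n} = 0"
proof -
  assume j: "j \<le> 0"
  have "of_int j / real (length B) ^ n \<le> 0" using j N_pos by (simp add: divide_nonpos_pos)
  then have "{..< of_int j / real (length B) ^ n} \<subseteq> {..<0}" by auto
  then have "measure M {..< of_int j / real (length B) ^ n} \<le> 0"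
    using left_zero finite_measure_mono[of _ "{..<0}"] by fastforce
  then show ?thesis using measure_nonneg[of M "{..< of_int j / real (length B) ^ n}"] by simp
qed

lemma lt_succ: "measure M {..< (of_int j + 1) / real (length B) ^ n} =
   measure M {..< of_int j / real (length B) ^ n} + measure M (nint (length B) j n)"
proof -
  have le: "of_int j / real (length B) ^ n \<le> (of_int j + 1) / real (length B) ^ n"
    using N_pos by (simp add: divide_right_mono)
  have "{..< (of_int j + 1) / real (length B) ^ n} =
     {..< of_int j / real (length B) ^ n} \<union> nint (length B) j n"
    using le by (auto simp: nint_def)
  moreover have "{..< of_int j / real (length B) ^ n} \<inter> nint (length B) j n = {}"
    by (auto simp: nint_def)
  ultimately show ?thesis by (simp add: finite_measure_Union)
qed

lemma cdf_lt: "measure M {..q} = measure M {..<q}"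
proof -
  have "{..q} = {..<q} \<union> {q}" by auto
  moreover have "measure M ({..<q} \<union> {q}) = measure M {..<q} + measure M {q}"
    by (rule finite_measure_Union) auto
  ultimately have "measure M {..q} = measure M {..<q} + measure M {q}" by simp
  then show ?thesis by (simp add: atom_zero)
qed

lemma real_distr: "real_distribution M"
  by (simp add: real_distribution_def real_distribution_axioms_def ps sets_M)

end

lemma ssm_unique:
  assumes M1: "ssm B M1" and M2: "ssm B M2"
  shows "M1 = M2"
proof -
  interpret A: ssm B M1 by (rule M1)
  interpret C: ssm B M2 by (rule M2)
  let ?N = "real (length B)"
  have nint_eq: "measure M1 (nint (length B) m n) = measure M2 (nint (length B) m n)" for m n
  proof (induction n arbitrary: m)
    case 0 then show ?case by (simp add: A.nint0 C.nint0)
  next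
    case (Suc n) then show ?case by (simp add: A.nint_step C.nint_step)
  qed
  have lt_nat: "measure M1 {..< of_int (int j) / ?N ^ n} = measure M2 {..< of_int (int j) / ?N ^ n}" for j n
  proof (induction j)
    case 0 then show ?case using A.lt_neg[of 0 n] C.lt_neg[of 0 n] by simp
  next
    case (Suc j)
    then show ?case using A.lt_succ[of "int j" n] C.lt_succ[of "int j" n] nint_eq[of "int j" n]
      by (simp add: add.commute)
  qed
  have lt_eq: "measure M1 {..< of_int j / ?N ^ n} = measure M2 {..< of_int j / ?N ^ n}" for j n
  proof (cases "j \<le> 0")
    case True then show ?thesis using A.lt_neg C.lt_neg by simp
  next
    case False
    then obtain j' where "j = int j'" by (metis linear zero_le_imp_eq_int)
    then show ?thesis using lt_nat by simp
  qed
  have cdf_eq: "cdf M1 x = cdf M2 x" for x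
  proof -
    define q where "q n = of_int (\<lfloor>x * ?N ^ n\<rfloor> + 1) / ?N ^ n" for n
    have Np: "?N ^ n > 0" for n using A.N_pos by simp
    have q1: "x \<le> q n" for n
    proof -
      have "x * ?N ^ n \<le> of_int (\<lfloor>x * ?N ^ n\<rfloor> + 1)" by linarith
      then show ?thesis using Np[of n] by (simp add: q_def le_divide_eq)
    qed
    have q2: "q n \<le> x + (1 / ?N) ^ n" for n
    proof -
      have "of_int (\<lfloor>x * ?N ^ n\<rfloor> + 1) \<le> x * ?N ^ n + 1" by linarith
      then have "q n \<le> (x * ?N ^ n + 1) / ?N ^ n" using Np[of n]
        by (simp add: q_def divide_right_mono)
      also have "\<dots> = x + (1 / ?N) ^ n" using Np[of n] by (simp add: field_simps power_one_over)
      finally show ?thesis .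
    qed
    have N3: "?N \<ge> 3" using A.N_ge by simp
    then have "1 / ?N < 1" by (simp add: divide_less_eq del: of_nat_le_iff)
    then have "(\<lambda>n. x + (1 / ?N) ^ n) \<longlonglongrightarrow> x + 0"
      by (intro tendsto_add tendsto_const LIMSEQ_power_zero) auto
    then have h: "(\<lambda>n. x + (1 / ?N) ^ n) \<longlonglongrightarrow> x" by simp
    have qlim: "q \<longlonglongrightarrow> x"
      by (rule real_tendsto_sandwich[OF _ _ tendsto_const h]) (simp_all add: q1 q2 always_eventually)
    interpret RA: real_distribution M1 by (rule A.real_distr)
    interpret RC: real_distribution M2 by (rule C.real_distr)
    have c1: "isCont (cdf M1) x" using A.atom_zero RA.isCont_cdf by simp
    have c2: "isCont (cdf M2) x" using C.atom_zero RC.isCont_cdf by simp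
    have l1: "(\<lambda>n. cdf M1 (q n)) \<longlonglongrightarrow> cdf M1 x" by (rule isCont_tendsto_compose[OF c1 qlim])
    have l2: "(\<lambda>n. cdf M2 (q n)) \<longlonglongrightarrow> cdf M2 x" by (rule isCont_tendsto_compose[OF c2 qlim])
    have "cdf M1 (q n) = cdf M2 (q n)" for n
      using lt_eq[of "\<lfloor>x * ?N ^ n\<rfloor> + 1" n] by (simp add: cdf_def A.cdf_lt C.cdf_lt q_def)
    then have "(\<lambda>n. cdf M2 (q n)) \<longlonglongrightarrow> cdf M1 x" using l1 by simp
    then show ?thesis using l2 LIMSEQ_unique by blast
  qed
  show ?thesis
    by (rule cdf_unique[OF A.real_distr C.real_distr]) (use cdf_eq in auto)
qed



definition sval :: "nat \<Rightarrow> nat stream \<Rightarrow> real" where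
  "sval K \<omega> = (\<Sum>i. real (min (\<omega> !! i) (K - 1)) / real K ^ Suc i)"

lemma sval_summable:
  assumes K: "K \<ge> 2"
  shows "summable (\<lambda>i. real (min (\<omega> !! i) (K - 1)) / real K ^ Suc i)"
proof (rule summable_comparison_test)
  show "summable (\<lambda>i. (1 / real K) ^ i)" using K by (intro summable_geometric) auto
  show "\<exists>N. \<forall>n\<ge>N. norm (real (min (\<omega> !! n) (K - 1)) / real K ^ Suc n) \<le> (1 / real K) ^ n"
  proof (intro exI allI impI)
    fix n :: nat
    have Kp: "real K ^ Suc n > 0" using K by simp
    have "real (min (\<omega> !! n) (K - 1)) \<le> real K" by simp
    then have "real (min (\<omega> !! n) (K - 1)) / real K ^ Suc n \<le> real K / real K ^ Suc n"
      using Kp by (intro divide_right_mono) auto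
    also have "\<dots> = (1 / real K) ^ n" using K by (simp add: power_one_over)
    finally show "norm (real (min (\<omega> !! n) (K - 1)) / real K ^ Suc n) \<le> (1 / real K) ^ n"
      by simp
  qed
qed

lemma sval_cons:
  assumes K: "K \<ge> 2" and d: "d < K"
  shows "sval K (d ## \<omega>) = sim_map K d (sval K \<omega>)"
proof -
  let ?f = "\<lambda>i. real (min ((d ## \<omega>) !! i) (K - 1)) / real K ^ Suc i"
  have "(\<lambda>i. real (min (\<omega> !! i) (K - 1)) / real K ^ Suc i) sums sval K \<omega>"
    using sval_summable[OF K] by (simp add: sval_def summable_sums)
  then have "(\<lambda>i. (1 / real K) * (real (min (\<omega> !! i) (K - 1)) / real K ^ Suc i)) sums
      ((1 / real K) * sval K \<omega>)"
    by (rule sums_mult)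
  moreover have "(\<lambda>i. ?f (Suc i)) = (\<lambda>i. (1 / real K) * (real (min (\<omega> !! i) (K - 1)) / real K ^ Suc i))"
    by (simp add: field_simps)
  ultimately have "(\<lambda>i. ?f (Suc i)) sums ((1 / real K) * sval K \<omega>)" by simp
  then have "?f sums ((1 / real K) * sval K \<omega> + ?f 0)" using sums_Suc_iff[of ?f] by blast
  then have "sval K (d ## \<omega>) = (1 / real K) * sval K \<omega> + ?f 0"
    by (simp add: sval_def sums_iff)
  also have "?f 0 = real d / real K" using d by simp
  finally show ?thesis by (simp add: sim_map_def add_divide_distrib)
qed

lemma sval_measurable[measurable]: "sval K \<in> borel_measurable (stream_space (measure_pmf p))"
  unfolding sval_def by measurable



lemma sim_pre_borel: "A \<in> sets borel \<Longrightarrow> sim_map K d -` A \<in> sets borel"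
proof (rule measurable_sets_borel[of _ borel])
  show "sim_map K d \<in> borel_measurable borel" unfolding sim_map_def by measurable
qed

lemma ss_exists:
  assumes bdv: "is_bdv B"
  shows "\<exists>\<mu>. prob_space \<mu> \<and> sets \<mu> = sets (borel :: real measure) \<and> self_similar B \<mu>"
proof -
  let ?N = "length B" and ?D = "digit_set B" and ?k = "sum_list B"
  have N3: "?N \<ge> 3" using bdv by (simp add: is_bdv_def)
  have fin: "finite ?D" by (simp add: digit_set_def)
  have cardD: "card ?D = ?k" using bdv card_digit_set by (simp add: is_bdv_def)
  have k2: "?k \<ge> 2" using bdv by (simp add: is_bdv_def)
  have ne: "?D \<noteq> {}" proof assume "?D = {}" then have "card ?D = 0" by simp then show False using cardD k2 by linarith qed
  have Dlt: "d \<in> ?D \<Longrightarrow> d < ?N" for d by (simp add: digit_set_def)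
  define p where "p = pmf_of_set ?D"
  define S where "S = stream_space (measure_pmf p)"
  interpret PS: prob_space S
    unfolding S_def by (rule prob_space.prob_space_stream_space) (rule prob_space_measure_pmf)
  define \<mu> where "\<mu> = distr S borel (sval ?N)"
  have meas[measurable]: "sval ?N \<in> borel_measurable S" unfolding S_def by measurable
  have ps: "prob_space \<mu>" unfolding \<mu>_def by (rule PS.prob_space_distr) (rule meas)
  interpret PM: prob_space \<mu> by (rule ps)
  have sets: "sets \<mu> = sets borel" by (simp add: \<mu>_def)
  have em: "emeasure \<mu> X = (\<integral>\<^sup>+\<omega>. indicator X (sval ?N \<omega>) \<partial>S)" if X: "X \<in> sets borel" for X
  proof -
    have "emeasure \<mu> X = (\<integral>\<^sup>+x. indicator X x \<partial>\<mu>)" using X sets by simp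
    also have "\<dots> = (\<integral>\<^sup>+\<omega>. indicator X (sval ?N \<omega>) \<partial>S)"
      unfolding \<mu>_def using X by (subst nn_integral_distr) auto
    finally show ?thesis .
  qed
  have "self_similar B \<mu>"
    unfolding self_similar_def
  proof
    fix A :: "real set" assume A: "A \<in> sets borel"
    have "emeasure \<mu> A = (\<integral>\<^sup>+\<omega>. indicator A (sval ?N \<omega>) \<partial>S)" by (rule em[OF A])
    also have "\<dots> = (\<integral>\<^sup>+d. (\<integral>\<^sup>+\<omega>. indicator A (sval ?N (d ## \<omega>)) \<partial>S) \<partial>measure_pmf p)"
      unfolding S_def
      by (rule prob_space.nn_integral_stream_space[OF prob_space_measure_pmf])
        (use A in \<open>simp add: S_def[symmetric]\<close>)
    also have "\<dots> = (\<Sum>d\<in>?D. (\<integral>\<^sup>+\<omega>. indicator A (sval ?N (d ## \<omega>)) \<partial>S)) / card ?D"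
      unfolding p_def by (rule nn_integral_pmf_of_set[OF ne fin])
    also have "\<dots> = (\<Sum>d\<in>?D. emeasure \<mu> (sim_map ?N d -` A)) / card ?D"
    proof -
      have "(\<integral>\<^sup>+\<omega>. indicator A (sval ?N (d ## \<omega>)) \<partial>S) = emeasure \<mu> (sim_map ?N d -` A)"
        if d: "d \<in> ?D" for d
      proof -
        have "emeasure \<mu> (sim_map ?N d -` A) =
            (\<integral>\<^sup>+\<omega>. indicator (sim_map ?N d -` A) (sval ?N \<omega>) \<partial>S)"
          by (rule em) (rule sim_pre_borel[OF A])
        also have "\<dots> = (\<integral>\<^sup>+\<omega>. indicator A (sval ?N (d ## \<omega>)) \<partial>S)"
          using sval_cons[of ?N d] Dlt[OF d] N3 by (simp add: indicator_def)
        finally show ?thesis by simp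
      qed
      then show ?thesis by simp
    qed
    finally have eq: "emeasure \<mu> A = (\<Sum>d\<in>?D. emeasure \<mu> (sim_map ?N d -` A)) / card ?D" .
    have "ennreal (measure \<mu> A) = ennreal ((1 / real ?k) * (\<Sum>d\<in>?D. measure \<mu> (sim_map ?N d -` A)))"
    proof -
      have "ennreal (measure \<mu> A) = (\<Sum>d\<in>?D. ennreal (measure \<mu> (sim_map ?N d -` A))) / card ?D"
        using eq by (simp add: PM.emeasure_eq_measure)
      also have "\<dots> = ennreal (\<Sum>d\<in>?D. measure \<mu> (sim_map ?N d -` A)) / ennreal (real ?k)"
        using cardD by (simp add: ennreal_of_nat_eq_real_of_nat)
      also have "\<dots> = ennreal ((\<Sum>d\<in>?D. measure \<mu> (sim_map ?N d -` A)) / real ?k)"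
        using k2 by (intro divide_ennreal) (auto intro: sum_nonneg)
      finally show ?thesis by simp
    qed
    then show "measure \<mu> A = (1 / real ?k) * (\<Sum>d\<in>?D. measure \<mu> (sim_map ?N d -` A))"
      by (rule ennreal_inj[THEN iffD1, rotated 2]) (auto intro!: sum_nonneg divide_nonneg_nonneg)
  qed
  then show ?thesis using ps sets by blast
qed



context ssm begin

lemma unit_one: "measure M {0..1} = 1"
proof -
  have "measure M {0..<1} = 1" using nint0[of 0] by (simp add: nint_def)
  moreover have "measure M {0..<1} \<le> measure M {0..1}" by (rule finite_measure_mono) auto
  ultimately show ?thesis using prob_le_1[of "{0..1}"] by linarith
qed

end

lemma bdv_measure_ssm:
  assumes "is_bdv B"
  shows "ssm B (bdv_measure B)"
proof -
  have ex1: "\<exists>!\<mu>. prob_space \<mu> \<and> sets \<mu> = sets (borel :: real measure) \<and> self_similar B \<mu>"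
  proof -
    obtain \<mu> where \<mu>: "prob_space \<mu> \<and> sets \<mu> = sets (borel :: real measure) \<and> self_similar B \<mu>"
      using ss_exists[OF assms] by blast
    show ?thesis
    proof (rule ex1I[of _ \<mu>])
      show "prob_space \<mu> \<and> sets \<mu> = sets borel \<and> self_similar B \<mu>" by (rule \<mu>)
      fix \<nu> assume "prob_space \<nu> \<and> sets \<nu> = sets (borel :: real measure) \<and> self_similar B \<nu>"
      then show "\<nu> = \<mu>" using \<mu> assms ssm_unique[of B \<nu> \<mu>] by (simp add: ssm_def)
    qed
  qed
  have "prob_space (bdv_measure B) \<and> sets (bdv_measure B) = sets borel \<and> self_similar B (bdv_measure B)"
    unfolding bdv_measure_def by (rule theI'[OF ex1])
  then show ?thesis using assms by (simp add: ssm_def)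
qed

definition reflx :: "real \<Rightarrow> real" where "reflx x = 1 - x"

lemma refl_meas[measurable]: "reflx \<in> borel_measurable borel"
  unfolding reflx_def by measurable

lemma ssm_rev:
  assumes "ssm B M"
  shows "ssm (rev B) (distr M borel reflx)"
proof -
  interpret ssm B M by (rule assms)
  let ?M' = "distr M borel reflx" and ?N = "length B" and ?D = "digit_set B"
  have mr: "reflx \<in> measurable M borel" unfolding measurable_cong_sets[OF sets_M refl] by (rule refl_meas)
  have md: "measure ?M' X = measure M (reflx -` X)" if "X \<in> sets borel" for X
    using measure_distr[OF mr that] space_M by simp
  have inj: "inj_on (\<lambda>d. ?N - 1 - d) ?D"
    by (auto simp: inj_on_def dest!: D_lt)
  have pre: "reflx -` (sim_map ?N (?N - 1 - d) -` A) = sim_map ?N d -` (reflx -` A)"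
    if d: "d \<in> ?D" for d A
  proof -
    have "real (?N - 1 - d) = real ?N - 1 - real d" using D_lt[OF d] by (simp add: of_nat_diff)
    then have "sim_map ?N (?N - 1 - d) (reflx x) = reflx (sim_map ?N d x)" for x
      using N_pos by (simp add: sim_map_def reflx_def field_simps)
    then show ?thesis by auto
  qed
  have "self_similar (rev B) ?M'"
    unfolding self_similar_def
  proof
    fix A :: "real set" assume A: "A \<in> sets borel"
    have rA: "reflx -` A \<in> sets borel" by (rule measurable_sets_borel[OF refl_meas A])
    have "measure ?M' A = measure M (reflx -` A)" by (rule md[OF A])
    also have "\<dots> = (1 / real (sum_list B)) * (\<Sum>d\<in>?D. measure M (sim_map ?N d -` (reflx -` A)))"
      by (rule ssA[OF rA])
    also have "(\<Sum>d\<in>?D. measure M (sim_map ?N d -` (reflx -` A))) =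
        (\<Sum>d\<in>?D. measure ?M' (sim_map ?N (?N - 1 - d) -` A))"
    proof (rule sum.cong[OF refl])
      fix d assume d: "d \<in> ?D"
      show "measure M (sim_map ?N d -` (reflx -` A)) = measure ?M' (sim_map ?N (?N - 1 - d) -` A)"
        by (simp only: md[OF sim_pre_borel[OF A]] pre[OF d])
    qed
    also have "\<dots> = (\<Sum>d'\<in>digit_set (rev B). measure ?M' (sim_map ?N d' -` A))"
      by (simp only: digit_set_rev sum.reindex[OF inj] comp_def)
    finally show "measure ?M' A = (1 / real (sum_list (rev B))) *
        (\<Sum>d\<in>digit_set (rev B). measure ?M' (sim_map (length (rev B)) d -` A))"
      by (simp add: sum_list_rev)
  qed
  moreover have "prob_space ?M'" by (rule prob_space_distr) (rule mr)
  moreover have "sets ?M' = sets borel" by simp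
  ultimately show ?thesis using is_bdv_rev[OF bdv] by (simp add: ssm_def)
qed

theorem proposition2p5:
  fixes B :: "nat list" and x :: real
  assumes "is_bdv B" and "x \<in> {0..1}"
  shows "bdv_cdf (rev B) x = 1 - bdv_cdf B (1 - x)"
proof -
  let ?M = "bdv_measure B"
  have S: "ssm B ?M" by (rule bdv_measure_ssm[OF assms(1)])
  interpret ssm B ?M by (rule S)
  have S': "ssm (rev B) (bdv_measure (rev B))" by (rule bdv_measure_ssm[OF is_bdv_rev[OF assms(1)]])
  have eq: "bdv_measure (rev B) = distr ?M borel reflx"
    by (rule ssm_unique[OF S' ssm_rev[OF S]])
  have mr: "reflx \<in> measurable ?M borel" unfolding measurable_cong_sets[OF sets_M refl] by (rule refl_meas)
  have "bdv_cdf (rev B) x = measure ?M (reflx -` {0..x})"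
    unfolding bdv_cdf_def eq using measure_distr[OF mr, of "{0..x}"] space_M by simp
  also have "reflx -` {0..x} = {1 - x..1}" by (auto simp: reflx_def)
  finally have l: "bdv_cdf (rev B) x = measure ?M {1 - x..1}" .
  have x: "0 \<le> 1 - x" "1 - x \<le> 1" using assms(2) by auto
  have "measure ?M {1 - x..1} = measure ?M ({1 - x} \<union> {1 - x<..1})"
    using x by (intro arg_cong[where f="measure ?M"]) auto
  also have "\<dots> = measure ?M {1 - x} + measure ?M {1 - x<..1}"
    by (rule finite_measure_Union) auto
  finally have a: "measure ?M {1 - x..1} = measure ?M {1 - x<..1}" using atom_zero by simp
  have "measure ?M {0..1} = measure ?M ({0..1 - x} \<union> {1 - x<..1})"
    using x by (intro arg_cong[where f="measure ?M"]) auto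
  also have "\<dots> = measure ?M {0..1 - x} + measure ?M {1 - x<..1}"
    by (rule finite_measure_Union) auto
  finally have b: "1 = measure ?M {0..1 - x} + measure ?M {1 - x<..1}" using unit_one by simp
  show ?thesis using l a b by (simp add: bdv_cdf_def)
qed


end
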